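(* For every assessment $\mathcal{A}\subseteq\mathscr{Q}$, $\mathrm{Ex}(\mathcal{A})=\mathrm{Rs}(\mathrm{Posi}(\mathscr{V}^s_{>0}\cup\mathcal{A}))$.
   Context: Let $\mathcal{X}$ be a nonempty set and let $\mathscr{V}$ be the real vector space of all functions $u:\mathcal{X}\to\mathbb{R}$ (options), with pointwise operations. For $u,v\in\mathscr{V}$, $u\le v$ iff $u(x)\le v(x)$ for all $x\in\mathcal{X}$, and $u<v$ iff $u\le v$ and $u\neq v$. Let $\mathscr{V}_{>0}=\{u\in\mathscr{V}:0<u\}$, $\mathscr{V}_{\le0}=\{u\in\mathscr{V}:u\le0\}$ and $\mathscr{V}^s_{>0}=\{\{u\}:u\in\mathscr{V}_{>0}\}$. Let $\mathscr{Q}$ be the set of all finite subsets of $\mathscr{V}$ (including $\emptyset$). For a positive integer $n$, $\mathbb{R}^{n,+}=\{\boldsymbol\lambda\in\mathbb{R}^n:\lambda_j\ge0\ \forall j,\ \sum_j\lambda_j>0\}$, and for $\boldsymbol\lambda\in\mathbb{R}^n$, $\mathbf u=(u_1,\dots,u_n)\in\mathscr{V}^n$, $\boldsymbol\lambda\mathbf u=\sum_{j=1}^n\lambda_ju_j$. A set of desirable option sets is any $K\subseteq\mathscr{Q}$. It is coherent if for all $A,B\in K$: (K0) $A\setminus\{0\}\in K$; (K1) $\{0\}\notin K$; (K2) $\mathscr{V}^s_{>0}\subseteq K$; (K3) $\{\boldsymbol\lambda(\mathbf u)\mathbf u:\mathbf u\in A\times B\}\in K$ for every map $\boldsymbol\lambda:A\times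 B\to\mathbb{R}^{2,+}$; (K4) $A\cup Q\in K$ for all $Q\in\mathscr{Q}$. $\bar{\mathbf K}$ denotes the set of coherent sets of desirable option sets. An assessment is any subset $\mathcal{A}\subseteq\mathscr{Q}$. Let $\bar{\mathbf K}(\mathcal A)=\{K\in\bar{\mathbf K}:\mathcal A\subseteq K\}$ and $\mathrm{Ex}(\mathcal A)=\bigcap\bar{\mathbf K}(\mathcal A)$, with the convention $\bigcap\emptyset=\mathscr{Q}$. For $\mathcal{A}\subseteq\mathscr{Q}$: $\mathrm{Posi}(\mathcal{A})=\{\{\boldsymbol\lambda(\mathbf u)\mathbf u:\mathbf u\in\times_{k=1}^nA_k\}: n\in\mathbb{N},\ A_1,\dots,A_n\in\mathcal A,\ \boldsymbol\lambda:\times_{k=1}^nA_k\to\mathbb{R}^{n,+}\}$ (where $\mathbb{N}$ denotes the positive integers), and $\mathrm{Rs}(\mathcal{A})=\{A\in\mathscr{Q}:\exists B\in\mathcal{A},\ B\setminus\mathscr{V}_{\le0}\subseteq A\}$. *)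

theory Defs
  imports Complex_Main "HOL-Library.Function_Algebras" "HOL-Library.FuncSet"
begin

type_synonym 'x opt = "'x \<Rightarrow> real"

definition Qs :: "'x opt set set" where
  "Qs = {A. finite A}"

definition Vpos :: "'x opt set" where
  "Vpos = {u. 0 < u}"

definition Vnonpos :: "'x opt set" where
  "Vnonpos = {u. u \<le> 0}"

definition Vspos :: "'x opt set set" where
  "Vspos = {{u} | u. u \<in> Vpos}"

text \<open>lambda in R^{n,+}, coordinates indexed by 0..n-1\<close>
definition Rnplus :: "nat \<Rightarrow> (nat \<Rightarrow> real) set" where
  "Rnplus n = {l. (\<forall>j<n. 0 \<le> l j) \<and> (\<Sum>j<n. l j) > 0}"

definition coherent :: "'x opt set set \<Rightarrow> bool" where
  "coherent K \<longleftrightarrow> K \<subseteq> Qs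
     \<and> (\<forall>A\<in>K. A - {0} \<in> K)
     \<and> {0} \<notin> K
     \<and> Vspos \<subseteq> K
     \<and> (\<forall>A\<in>K. \<forall>B\<in>K. \<forall>lam :: 'x opt \<times> 'x opt \<Rightarrow> (nat \<Rightarrow> real).
           (\<forall>p\<in>A \<times> B. lam p \<in> Rnplus 2) \<longrightarrow>
           {(\<lambda>x. lam (u, v) 0 * u x + lam (u, v) 1 * v x) | u v. u \<in> A \<and> v \<in> B} \<in> K)
     \<and> (\<forall>A\<in>K. \<forall>Q\<in>Qs. A \<union> Q \<in> K)"

definition Ex :: "'x opt set set \<Rightarrow> 'x opt set set" where
  "Ex \<A> = (if {K. coherent K \<and> \<A> \<subseteq> K} = {} then Qs
           else \<Inter> {K. coherent K \<and> \<A> \<subseteq> K})"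

text \<open>Tuples u in the product of A_0..A_{n-1} are functions nat => opt in PiE {..<n} A.\<close>
definition Posi :: "'x opt set set \<Rightarrow> 'x opt set set" where
  "Posi \<A> = {{(\<lambda>x. \<Sum>k<n. lam u k * u k x) | u. u \<in> PiE {..<n} As} | n As lam.
       0 < n \<and> (\<forall>k<n. As k \<in> \<A>) \<and> (\<forall>u\<in>PiE {..<n} As. lam u \<in> Rnplus n)}"

definition Rs :: "'x opt set set \<Rightarrow> 'x opt set set" where
  "Rs \<A> = {A \<in> Qs. \<exists>B\<in>\<A>. B - Vnonpos \<subseteq> A}"

end

theory Submission
  imports Defs
begin


lemma sum_split_lt: "(\<Sum>k<n+m. f k) = (\<Sum>k<n. f k) + (\<Sum>k<m. f (k + n::nat))"
  by (induction m) (auto simp: add.commute add.left_commute)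

lemma Rnplus2I: "0 \<le> a \<Longrightarrow> 0 \<le> b \<Longrightarrow> 0 < a + b \<Longrightarrow> (\<lambda>j::nat. if j = 0 then a else b) \<in> Rnplus 2"
  unfolding Rnplus_def by (auto simp: numeral_2_eq_2 less_Suc_eq)

lemma Rnplus2D: "l \<in> Rnplus 2 \<Longrightarrow> 0 \<le> l 0 \<and> 0 \<le> l 1 \<and> 0 < l 0 + l 1"
  unfolding Rnplus_def by (auto simp: numeral_2_eq_2)

definition comb :: "nat \<Rightarrow> (nat \<Rightarrow> real) \<Rightarrow> (nat \<Rightarrow> 'x opt) \<Rightarrow> 'x opt" where
  "comb n l u = (\<lambda>x. \<Sum>k<n. l k * u k x)"

lemma Posi_iff: "P \<in> Posi X \<longleftrightarrow> (\<exists>n As lam. P = {comb n (lam u) u | u. u \<in> PiE {..<n} As} \<and> 0 < n \<and> (\<forall>k<n. As k \<in> X) \<and> (\<forall>u\<in>PiE {..<n} As. lam u \<in> Rnplus n))"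
  unfolding Posi_def comb_def by blast


lemma cohQ: "coherent K \<Longrightarrow> A \<in> K \<Longrightarrow> finite A" unfolding coherent_def Qs_def by blast
lemma coh0: "coherent K \<Longrightarrow> A \<in> K \<Longrightarrow> A - {0} \<in> K" unfolding coherent_def by blast
lemma coh1: "coherent K \<Longrightarrow> {0} \<notin> K" unfolding coherent_def by blast
lemma coh2: "coherent K \<Longrightarrow> 0 < u \<Longrightarrow> {u} \<in> K" unfolding coherent_def Vspos_def Vpos_def by blast
lemma coh3: "coherent K \<Longrightarrow> A \<in> K \<Longrightarrow> B \<in> K \<Longrightarrow> (\<forall>p\<in>A \<times> B. lam p \<in> Rnplus 2) \<Longrightarrow>
   {(\<lambda>x. lam (u, v) 0 * u x + lam (u, v) 1 * v x) | u v. u \<in> A \<and> v \<in> B} \<in> K"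
  unfolding coherent_def by blast
lemma coh4: "coherent K \<Longrightarrow> F \<in> K \<Longrightarrow> F \<subseteq> G \<Longrightarrow> finite G \<Longrightarrow> G \<in> K"
  unfolding coherent_def Qs_def by (metis Un_absorb1 mem_Collect_eq)

lemma remove1: assumes K: "coherent K" and D: "D \<in> K" and u: "u \<le> 0" shows "D - {u} \<in> K"
proof (cases "u \<in> D \<and> u \<noteq> 0")
  case False
  then show ?thesis
  proof (cases "u \<in> D")
    case True then have "u = 0" using False by blast
    then show ?thesis using coh0[OF K D] by simp
  next
    case f: False then show ?thesis using D by simp
  qed
next
  case True
  have "0 < - u" using u True by (auto simp: less_fun_def le_fun_def fun_eq_iff intro: antisym)
  then have nu: "{- u} \<in> K" by (rule coh2[OF K])
  define lam where "lam = (\<lambda>(v::'a opt, w::'a opt). if v = u then (\<lambda>j::nat. if j = 0 then (1::real) else 1) else (\<lambda>j. if j = 0 then 1 else 0))"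
  have "\<forall>p\<in>D \<times> {-u}. lam p \<in> Rnplus 2" unfolding lam_def using Rnplus2I[of 1 1] Rnplus2I[of 1 0] by auto
  from coh3[OF K D nu this] have G: "{(\<lambda>x. lam (v, w) 0 * v x + lam (v, w) 1 * w x) | v w. v \<in> D \<and> w \<in> {-u}} \<in> K" .
  have "{(\<lambda>x. lam (v, w) 0 * v x + lam (v, w) 1 * w x) | v w. v \<in> D \<and> w \<in> {-u}} - {0} \<subseteq> D - {u}"
  proof
    fix z assume "z \<in> {(\<lambda>x. lam (v, w) 0 * v x + lam (v, w) 1 * w x) | v w. v \<in> D \<and> w \<in> {-u}} - {0}"
    then obtain v where v: "v \<in> D" "z = (\<lambda>x. lam (v,-u) 0 * v x + lam (v,-u) 1 * (-u) x)" "z \<noteq> 0" by blast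
    show "z \<in> D - {u}"
    proof (cases "v = u")
      case True then have "z = 0" using v by (simp add: lam_def fun_eq_iff)
      then show ?thesis using v by simp
    next
      case False then have "z = v" using v by (simp add: lam_def)
      then show ?thesis using v False by simp
    qed
  qed
  moreover have "finite (D - {u})" using cohQ[OF K D] by simp
  ultimately show ?thesis using coh4[OF K coh0[OF K G]] by blast
qed

lemma remove_set: assumes K: "coherent K" shows "finite S \<Longrightarrow> S \<subseteq> Vnonpos \<Longrightarrow> D \<in> K \<Longrightarrow> D - S \<in> K"
proof (induction S rule: finite_induct)
  case empty then show ?case by simp
next
  case (insert u S)
  then have "D - S \<in> K" by simp
  moreover have "u \<le> 0" using insert unfolding Vnonpos_def by simp
  ultimately have "D - S - {u} \<in> K" using remove1[OF K] by blast
  then show ?case by (metis Diff_insert2 Diff_insert)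
qed

lemma Rs_sub: assumes K: "coherent K" shows "Rs K \<subseteq> K"
proof
  fix A assume "A \<in> Rs K"
  then obtain B where B: "B \<in> K" "B - Vnonpos \<subseteq> A" and A: "A \<in> Qs" unfolding Rs_def by blast
  have "B - (B \<inter> Vnonpos) \<in> K" using remove_set[OF K _ _ B(1)] cohQ[OF K B(1)] by simp
  moreover have "B - (B \<inter> Vnonpos) = B - Vnonpos" by blast
  ultimately show "A \<in> K" using coh4[OF K _ B(2)] A unfolding Qs_def by simp
qed


lemma iter:
  assumes K: "coherent K" and C: "C \<in> K" and E: "\<forall>c\<in>C. E c \<in> K"
  and good: "\<forall>c\<in>C. \<forall>e\<in>E c. \<exists>a b. 0 \<le> a \<and> 0 \<le> b \<and> 0 < a + b \<and> (\<lambda>x. a * c x + b * e x) \<in> S"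
  and fS: "finite S"
  shows "S \<in> K"
proof -
  define mu where "mu = (\<lambda>(c::'a opt, e::'a opt). SOME p. 0 \<le> fst p \<and> 0 \<le> snd p \<and> 0 < fst p + snd p \<and> (\<lambda>x. fst p * c x + snd p * e x) \<in> S)"
  have mu: "0 \<le> fst (mu (c,e)) \<and> 0 \<le> snd (mu (c,e)) \<and> 0 < fst (mu (c,e)) + snd (mu (c,e)) \<and> (\<lambda>x. fst (mu (c,e)) * c x + snd (mu (c,e)) * e x) \<in> S"
    if cE: "c \<in> C" "e \<in> E c" for c e
  proof -
    obtain a b where ab: "0 \<le> a \<and> 0 \<le> b \<and> 0 < a + b \<and> (\<lambda>x. a * c x + b * e x) \<in> S" using good[rule_format, OF cE] by blast
    show ?thesis unfolding mu_def prod.case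
      by (rule someI[of "\<lambda>p. 0 \<le> fst p \<and> 0 \<le> snd p \<and> 0 < fst p + snd p \<and> (\<lambda>x. fst p * c x + snd p * e x) \<in> S" "(a,b)"]) (use ab in simp)
  qed
  have fC: "finite C" using cohQ[OF K C] .
  have main: "finite P \<Longrightarrow> P \<subseteq> C \<Longrightarrow> \<exists>F\<in>K. F \<subseteq> (C - P) \<union> S" for P
  proof (induction P rule: finite_induct)
    case empty then show ?case using C by blast
  next
    case (insert c P)
    then obtain F where F: "F \<in> K" "F \<subseteq> (C - P) \<union> S" by auto
    have cC: "c \<in> C" "c \<notin> P" using insert by auto
    have Ec: "E c \<in> K" using E cC by blast
    define lam where "lam = (\<lambda>(f::'a opt, e::'a opt). if f = c then (\<lambda>j::nat. if j = 0 then fst (mu (c,e)) else snd (mu (c,e))) else (\<lambda>j. if j = 0 then 1 else 0))"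
    have "\<forall>p\<in>F \<times> E c. lam p \<in> Rnplus 2"
    proof
      fix p assume p: "p \<in> F \<times> E c"
      then obtain f e where fe: "p = (f,e)" "e \<in> E c" by blast
      show "lam p \<in> Rnplus 2"
      proof (cases "f = c")
        case True then show ?thesis using fe mu[OF cC(1) fe(2)] Rnplus2I by (simp add: lam_def)
      next
        case False then show ?thesis using fe Rnplus2I[of 1 0] by (simp add: lam_def)
      qed
    qed
    from coh3[OF K F(1) Ec this] have G: "{(\<lambda>x. lam (v, w) 0 * v x + lam (v, w) 1 * w x) | v w. v \<in> F \<and> w \<in> E c} \<in> K" .
    have "{(\<lambda>x. lam (v, w) 0 * v x + lam (v, w) 1 * w x) | v w. v \<in> F \<and> w \<in> E c} \<subseteq> (C - insert c P) \<union> S"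
    proof
      fix z assume "z \<in> {(\<lambda>x. lam (v, w) 0 * v x + lam (v, w) 1 * w x) | v w. v \<in> F \<and> w \<in> E c}"
      then obtain v w where vw: "v \<in> F" "w \<in> E c" "z = (\<lambda>x. lam (v, w) 0 * v x + lam (v, w) 1 * w x)" by blast
      show "z \<in> (C - insert c P) \<union> S"
      proof (cases "v = c")
        case True then show ?thesis using vw mu[OF cC(1) vw(2)] by (simp add: lam_def)
      next
        case False then have "z = v" using vw by (simp add: lam_def)
        then show ?thesis using vw F(2) False by blast
      qed
    qed
    then show ?case using G by blast
  qed
  from main[OF fC order_refl] obtain F where "F \<in> K" "F \<subseteq> S" by auto
  then show ?thesis using coh4[OF K _ _ fS] by blast
qed


lemma PiE_upd_Suc: "u' \<in> PiE {..<n} As \<Longrightarrow> c \<in> As n \<Longrightarrow> u'(n := c) \<in> PiE {..<Suc n} As"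
  unfolding PiE_def Pi_def extensional_def by auto

lemma comb_upd: "comb (Suc n) l (u'(n:=c)) = (\<lambda>x. comb n l u' x + l n * c x)"
  unfolding comb_def by (auto simp: fun_eq_iff intro!: sum.cong)

lemma Rnplus_Suc: "l \<in> Rnplus (Suc n) \<Longrightarrow> (\<forall>j\<le>n. 0 \<le> l j) \<and> 0 < (\<Sum>k<n. l k) + l n"
  unfolding Rnplus_def by auto

lemma posi_aux:
  assumes K: "coherent K"
  shows "\<forall>As S. (\<forall>k<n. As k \<in> K) \<longrightarrow> finite S \<longrightarrow> (\<forall>u \<in> PiE {..<n} As. \<exists>l \<in> Rnplus n. comb n l u \<in> S) \<longrightarrow> S \<in> K"
proof (induction n)
  case 0
  have "(\<lambda>_. undefined) \<in> PiE {..<0::nat} As" for As :: "nat \<Rightarrow> 'a opt set" by simp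
  moreover have "Rnplus 0 = {}" unfolding Rnplus_def by simp
  ultimately show ?case by (metis empty_iff)
next
  case (Suc n)
  show ?case
  proof (intro allI impI)
    fix As S assume As: "\<forall>k<Suc n. As k \<in> K" and fS: "finite S"
      and H: "\<forall>u\<in>PiE {..<Suc n} As. \<exists>l\<in>Rnplus (Suc n). comb (Suc n) l u \<in> S"
    have CK: "As n \<in> K" using As by simp
    have key: "\<exists>l\<in>Rnplus (Suc n). (\<lambda>x. comb n l u' x + l n * c x) \<in> S" if uc: "u' \<in> PiE {..<n} As" "c \<in> As n" for u' c
    proof -
      from H[rule_format, OF PiE_upd_Suc[OF uc]] obtain l where "l \<in> Rnplus (Suc n)" "comb (Suc n) l (u'(n := c)) \<in> S" by blast
      then show ?thesis by (auto simp: comb_upd)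
    qed
    show "S \<in> K"
    proof (cases "n = 0")
      case True
      define E where "E = (\<lambda>c::'a opt. {(\<lambda>x::'a. 1::real)})"
      have "0 < (\<lambda>x::'a. 1::real)" by (auto simp: less_fun_def le_fun_def)
      then have EK: "\<forall>c\<in>As n. E c \<in> K" unfolding E_def using coh2[OF K] by blast
      have good: "\<forall>c\<in>As n. \<forall>e\<in>E c. \<exists>a b. 0 \<le> a \<and> 0 \<le> b \<and> 0 < a + b \<and> (\<lambda>x. a * c x + b * e x) \<in> S"
      proof (intro ballI)
        fix c e assume c: "c \<in> As n" and e: "e \<in> E c"
        have "(\<lambda>_. undefined) \<in> PiE {..<n} As" using True by simp
        from key[OF this c] obtain l where l: "l \<in> Rnplus (Suc n)" "(\<lambda>x. comb n l (\<lambda>_. undefined) x + l n * c x) \<in> S" by blast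
        have "(\<lambda>x. comb n l (\<lambda>_. undefined) x + l n * c x) = (\<lambda>x. l n * c x + 0 * e x)"
          using True by (simp add: comb_def)
        moreover have "0 < l n" using Rnplus_Suc[OF l(1)] True by simp
        ultimately show "\<exists>a b. 0 \<le> a \<and> 0 \<le> b \<and> 0 < a + b \<and> (\<lambda>x. a * c x + b * e x) \<in> S"
          using l(2) by (intro exI[of _ "l n"] exI[of _ 0]) simp
      qed
      show ?thesis by (rule iter[OF K CK EK good fS])
    next
      case False
      let ?P = "\<lambda>c u' e. (\<exists>l\<in>Rnplus n. e = comb n l u') \<and> (\<exists>a b. 0 \<le> a \<and> 0 \<le> b \<and> 0 < a + b \<and> (\<lambda>x. a * c x + b * e x) \<in> S)"
      have ex: "\<exists>e. ?P c u' e" if uc: "u' \<in> PiE {..<n} As" "c \<in> As n" for u' c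
      proof -
        from key[OF uc] obtain l where l: "l \<in> Rnplus (Suc n)" "(\<lambda>x. comb n l u' x + l n * c x) \<in> S" by blast
        note lp = Rnplus_Suc[OF l(1)]
        show ?thesis
        proof (cases "0 < (\<Sum>k<n. l k)")
          case True
          have "l \<in> Rnplus n" unfolding Rnplus_def using lp True by auto
          moreover have "(\<lambda>x. comb n l u' x + l n * c x) = (\<lambda>x. l n * c x + 1 * comb n l u' x)" by (simp add: fun_eq_iff)
          ultimately show ?thesis using l(2) lp
            by (intro exI[of _ "comb n l u'"] conjI bexI[of _ l] exI[of _ "l n"] exI[of _ 1]) auto
        next
          case False
          have "(\<Sum>k<n. l k) = 0" using False lp 
          proof -
            have "0 \<le> (\<Sum>k<n. l k)" by (rule sum_nonneg) (use lp in auto)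
            then show ?thesis using False by linarith
          qed
          then have z: "\<forall>k<n. l k = 0" using lp by (subst (asm) sum_nonneg_eq_0_iff) auto
          have cz: "comb n l u' = (\<lambda>x. 0)" unfolding comb_def using z by (simp add: fun_eq_iff)
          have ln: "0 < l n" using lp \<open>(\<Sum>k<n. l k) = 0\<close> by simp
          have "(\<lambda>k::nat. if k = 0 then 1 else 0) \<in> Rnplus n" unfolding Rnplus_def using \<open>n \<noteq> 0\<close> by simp
          moreover have "(\<lambda>x. l n * c x + 0 * comb n (\<lambda>k::nat. if k = 0 then 1 else 0) u' x) = (\<lambda>x. comb n l u' x + l n * c x)"
            using cz by (simp add: fun_eq_iff)
          ultimately show ?thesis using l(2) ln
            by (intro exI[of _ "comb n (\<lambda>k::nat. if k = 0 then 1 else 0) u'"] conjI bexI[of _ "\<lambda>k::nat. if k = 0 then 1 else 0"] exI[of _ "l n"] exI[of _ 0]) auto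
        qed
      qed
      define pick where "pick c u' = (SOME e. ?P c u' e)" for c u'
      have pk: "?P c u' (pick c u')" if "u' \<in> PiE {..<n} As" "c \<in> As n" for u' c
        unfolding pick_def using someI_ex[OF ex[OF that]] .
      define E where "E c = pick c ` PiE {..<n} As" for c
      have fin: "finite (PiE {..<n} As)"
        by (rule finite_PiE) (use As cohQ[OF K] in auto)
      have EK: "\<forall>c\<in>As n. E c \<in> K"
      proof
        fix c assume c: "c \<in> As n"
        show "E c \<in> K"
        proof (rule Suc.IH[rule_format])
          show "As k \<in> K" if "k < n" for k using As that by simp
          show "finite (E c)" unfolding E_def using fin by simp
          show "\<exists>l\<in>Rnplus n. comb n l u \<in> E c" if u: "u \<in> PiE {..<n} As" for u
          proof -
            from pk[OF u c] obtain l where "l \<in> Rnplus n" "pick c u = comb n l u" by blast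
            moreover have "pick c u \<in> E c" unfolding E_def using u by blast
            ultimately show "\<exists>l\<in>Rnplus n. comb n l u \<in> E c" by metis
          qed
        qed
      qed
      have good: "\<forall>c\<in>As n. \<forall>e\<in>E c. \<exists>a b. 0 \<le> a \<and> 0 \<le> b \<and> 0 < a + b \<and> (\<lambda>x. a * c x + b * e x) \<in> S"
      proof (intro ballI)
        fix c e assume c: "c \<in> As n" and e: "e \<in> E c"
        then obtain u where u: "u \<in> PiE {..<n} As" "e = pick c u" unfolding E_def by blast
        show "\<exists>a b. 0 \<le> a \<and> 0 \<le> b \<and> 0 < a + b \<and> (\<lambda>x. a * c x + b * e x) \<in> S"
          using pk[OF u(1) c] u(2) by simp
      qed
      show ?thesis by (rule iter[OF K CK EK good fS])
    qed
  qed
qed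


lemma posi_sub: assumes K: "coherent K" and X: "X \<subseteq> K" shows "Posi X \<subseteq> K"
proof
  fix P assume "P \<in> Posi X"
  then obtain n As lam where P: "P = {comb n (lam u) u | u. u \<in> PiE {..<n} As}" "\<forall>k<n. As k \<in> X"
    "\<forall>u\<in>PiE {..<n} As. lam u \<in> Rnplus n" unfolding Posi_iff by blast
  have As: "\<forall>k<n. As k \<in> K" using P(2) X by blast
  have fin: "finite (PiE {..<n} As)" by (rule finite_PiE) (use As cohQ[OF K] in auto)
  have "finite P" unfolding P(1) using fin by (simp add: Setcompr_eq_image)
  moreover have "\<forall>u\<in>PiE {..<n} As. \<exists>l\<in>Rnplus n. comb n l u \<in> P" using P(1,3) by blast
  ultimately show "P \<in> K" using posi_aux[OF K, rule_format, OF _ _ ] As by blast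
qed

lemma Rs_mono: "X \<subseteq> Y \<Longrightarrow> Rs X \<subseteq> Rs Y" unfolding Rs_def by blast



lemma in_Posi: assumes "Y \<in> X" shows "Y \<in> Posi X"
proof -
  have "Y = {comb 1 ((\<lambda>u k. 1)  u) u | u. u \<in> PiE {..<1} (\<lambda>k. Y)}"
  proof
    show "Y \<subseteq> {comb 1 ((\<lambda>u k. 1)  u) u | u. u \<in> PiE {..<1} (\<lambda>k. Y)}"
    proof
      fix y assume y: "y \<in> Y"
      have "(\<lambda>k. if k < 1 then y else undefined) \<in> PiE {..<1} (\<lambda>k. Y)" using y by (auto simp: PiE_def extensional_def)
      moreover have "y = comb 1 ((\<lambda>u k. 1) (\<lambda>k. if k < 1 then y else undefined)) (\<lambda>k. if k < 1 then y else undefined)"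
        by (simp add: comb_def)
      ultimately show "y \<in> {comb 1 ((\<lambda>u k. 1)  u) u | u. u \<in> PiE {..<1} (\<lambda>k. Y)}" by blast
    qed
    show "{comb 1 ((\<lambda>u k. 1)  u) u | u. u \<in> PiE {..<1} (\<lambda>k. Y)} \<subseteq> Y"
      by (auto simp: comb_def PiE_def Pi_def)
  qed
  moreover have "\<forall>u\<in>PiE {..<1} (\<lambda>k. Y). (\<lambda>u k. 1::real) u \<in> Rnplus 1" by (simp add: Rnplus_def)
  ultimately have E: "Y = {comb 1 ((\<lambda>u k. 1)  u) u | u. u \<in> PiE {..<1} (\<lambda>k. Y)} \<and> 0 < (1::nat) \<and> (\<forall>k<1. (\<lambda>k. Y) k \<in> X)
     \<and> (\<forall>u\<in>PiE {..<1} (\<lambda>k. Y). (\<lambda>u k. 1::real) u \<in> Rnplus 1)" using assms by simp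
  show ?thesis unfolding Posi_iff
    apply (rule exI[of _ 1], rule exI[of _ "\<lambda>k. Y"], rule exI[of _ "\<lambda>u k. 1::real"])
    by (rule E)
qed


lemma pos_comb2: assumes "0 \<le> (c0::real)" "0 \<le> c1" "0 < c0 + c1" "0 < sa" "0 < sb" shows "0 < c0 * sa + c1 * sb"
proof (cases "c0 = 0")
  case True
  then show ?thesis using assms by simp
next
  case False
  then have "0 < c0 * sa" "0 \<le> c1 * sb" using assms by auto
  then show ?thesis by linarith
qed

lemma posi_K3:
  assumes PA: "PA \<in> Posi X" and PB: "PB \<in> Posi X"
  and ch: "\<forall>a\<in>PA. \<forall>b\<in>PB. 0 \<le> c0 a b \<and> 0 \<le> c1 a b \<and> 0 < c0 a b + c1 a b"
  shows "\<exists>P\<in>Posi X. P \<subseteq> {(\<lambda>x. c0 a b * a x + c1 a b * b x) | a b. a \<in> PA \<and> b \<in> PB}"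
proof -
  obtain n As la where A: "PA = {comb n (la u) u | u. u \<in> PiE {..<n} As}" "0<n" "\<forall>k<n. As k \<in> X"
     "\<forall>u\<in>PiE {..<n} As. la u \<in> Rnplus n" using PA unfolding Posi_iff by blast
  obtain m Bs lb where B: "PB = {comb m (lb u) u | u. u \<in> PiE {..<m} Bs}" "0<m" "\<forall>k<m. Bs k \<in> X"
     "\<forall>u\<in>PiE {..<m} Bs. lb u \<in> Rnplus m" using PB unfolding Posi_iff by blast
  define Cs where "Cs k = (if k < n then As k else Bs (k - n))" for k
  define su where "su w = (\<lambda>k. if k < n then w k else undefined)" for w :: "nat \<Rightarrow> 'a opt"
  define sv where "sv w = (\<lambda>k. if k < m then w (k + n) else undefined)" for w :: "nat \<Rightarrow> 'a opt"
  define a where "a w = comb n (la (su w)) (su w)" for w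
  define b where "b w = comb m (lb (sv w)) (sv w)" for w
  define L where "L w = (\<lambda>k. if k < n then c0 (a w) (b w) * la (su w) k else c1 (a w) (b w) * lb (sv w) (k - n))" for w
  have suP: "su w \<in> PiE {..<n} As" if "w \<in> PiE {..<n+m} Cs" for w
    using that unfolding su_def Cs_def PiE_def Pi_def extensional_def by (auto, metis trans_less_add1)
  have svP: "sv w \<in> PiE {..<m} Bs" if "w \<in> PiE {..<n+m} Cs" for w
    using that unfolding sv_def Cs_def PiE_def Pi_def extensional_def
    by (auto, metis add.commute add_diff_cancel_right' nat_add_left_cancel_less not_add_less2)
  have aP: "a w \<in> PA" if "w \<in> PiE {..<n+m} Cs" for w using suP[OF that] A(1) unfolding a_def by blast
  have bP: "b w \<in> PB" if "w \<in> PiE {..<n+m} Cs" for w using svP[OF that] B(1) unfolding b_def by blast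
  have s1: "(\<Sum>k<n. L w k * w k x) = c0 (a w) (b w) * a w x" for w x
    unfolding L_def a_def comb_def su_def sum_distrib_left by (intro sum.cong) auto
  have s2: "(\<Sum>k<m. L w (k + n) * w (k + n) x) = c1 (a w) (b w) * b w x" for w x
    unfolding L_def b_def comb_def sv_def sum_distrib_left by (intro sum.cong) auto
  have combL: "comb (n+m) (L w) w = (\<lambda>x. c0 (a w) (b w) * a w x + c1 (a w) (b w) * b w x)" for w
    unfolding comb_def by (rule ext) (simp only: sum_split_lt s1 s2)
  have t1: "(\<Sum>k<n. L w k) = c0 (a w) (b w) * (\<Sum>k<n. la (su w) k)" for w
    unfolding L_def sum_distrib_left by (intro sum.cong) auto
  have t2: "(\<Sum>k<m. L w (k + n)) = c1 (a w) (b w) * (\<Sum>k<m. lb (sv w) k)" for w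
    unfolding L_def sum_distrib_left by (intro sum.cong) auto
  have LR: "L w \<in> Rnplus (n+m)" if w: "w \<in> PiE {..<n+m} Cs" for w
  proof -
    have la: "la (su w) \<in> Rnplus n" using A(4) suP[OF w] by blast
    have lb: "lb (sv w) \<in> Rnplus m" using B(4) svP[OF w] by blast
    have c: "0 \<le> c0 (a w) (b w)" "0 \<le> c1 (a w) (b w)" "0 < c0 (a w) (b w) + c1 (a w) (b w)"
      using ch aP[OF w] bP[OF w] by auto
    have "\<forall>j<n+m. 0 \<le> L w j"
    proof (intro allI impI)
      fix j assume j: "j < n + m"
      show "0 \<le> L w j"
      proof (cases "j < n")
        case True then show ?thesis using la c unfolding L_def Rnplus_def by simp
      next
        case False then have "j - n < m" using j by simp
        then show ?thesis using False lb c unfolding L_def Rnplus_def by simp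
      qed
    qed
    moreover have "0 < (\<Sum>k<n+m. L w k)" unfolding sum_split_lt t1 t2
      using pos_comb2[OF c] la lb unfolding Rnplus_def by blast
    ultimately show ?thesis unfolding Rnplus_def by blast
  qed
  define P where "P = {comb (n+m) (L w) w | w. w \<in> PiE {..<n+m} Cs}"
  have E: "P = {comb (n+m) (L w) w | w. w \<in> PiE {..<n+m} Cs} \<and> 0 < n+m \<and> (\<forall>k<n+m. Cs k \<in> X)
     \<and> (\<forall>w\<in>PiE {..<n+m} Cs. L w \<in> Rnplus (n+m))"
    using P_def A(2,3) B(3) LR unfolding Cs_def by auto
  have "P \<in> Posi X" unfolding Posi_iff
    apply (rule exI[of _ "n+m"], rule exI[of _ Cs], rule exI[of _ L])
    by (rule E)
  moreover have "P \<subseteq> {(\<lambda>x. c0 a b * a x + c1 a b * b x) | a b. a \<in> PA \<and> b \<in> PB}"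
  proof
    fix p assume "p \<in> P"
    then obtain w where w: "w \<in> PiE {..<n+m} Cs" "p = comb (n+m) (L w) w" unfolding P_def by blast
    show "p \<in> {(\<lambda>x. c0 a b * a x + c1 a b * b x) | a b. a \<in> PA \<and> b \<in> PB}"
      using aP[OF w(1)] bP[OF w(1)] w(2) combL by blast
  qed
  ultimately show ?thesis by blast
qed


theorem mainTheorem14:
  fixes \<A> :: "('x \<Rightarrow> real) set set"
  assumes "\<A> \<subseteq> Qs"
  shows "Ex \<A> = Rs (Posi (Vspos \<union> \<A>))"
proof -
  define R where "R = Rs (Posi (Vspos \<union> \<A>))"
  have sub: "R \<subseteq> K" if K: "coherent K" "\<A> \<subseteq> K" for K
  proof -
    have "Vspos \<union> \<A> \<subseteq> K" using K unfolding coherent_def by blast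
    then have "Posi (Vspos \<union> \<A>) \<subseteq> K" by (rule posi_sub[OF K(1)])
    then show ?thesis unfolding R_def using Rs_mono[of "Posi (Vspos \<union> \<A>)" K] Rs_sub[OF K(1)] by blast
  qed
  have RQ: "R \<subseteq> Qs" unfolding R_def Rs_def by blast
  have VQ: "Vspos \<subseteq> Qs" unfolding Vspos_def Qs_def by auto
  have base: "Vspos \<union> \<A> \<subseteq> R"
  proof
    fix Y assume Y: "Y \<in> Vspos \<union> \<A>"
    then have "Y \<in> Qs" using VQ assms by blast
    moreover have "Y \<in> Posi (Vspos \<union> \<A>)" using in_Posi[OF Y] .
    ultimately show "Y \<in> R" unfolding R_def Rs_def by blast
  qed
  have z: "(0::'x opt) \<in> Vnonpos" unfolding Vnonpos_def by simp
  show ?thesis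
  proof (cases "{} \<in> R")
    case True
    have RQs: "R = Qs"
    proof
      show "Qs \<subseteq> R"
      proof
        fix A :: "'x opt set" assume A: "A \<in> Qs"
        from True obtain B where "B \<in> Posi (Vspos \<union> \<A>)" "B - Vnonpos \<subseteq> {}" unfolding R_def Rs_def by blast
        then show "A \<in> R" using A unfolding R_def Rs_def by blast
      qed
    qed (rule RQ)
    have none: "{K. coherent K \<and> \<A> \<subseteq> K} = {}"
    proof (rule ccontr)
      assume "{K. coherent K \<and> \<A> \<subseteq> K} \<noteq> {}"
      then obtain K where K: "coherent K" "\<A> \<subseteq> K" by blast
      then have "{} \<in> K" using sub True by blast
      then have "{0} \<in> K" using coh4[OF K(1), of "{}" "{0}"] by simp
      then show False using coh1[OF K(1)] by simp
    qed
    show ?thesis unfolding Ex_def using none RQs R_def by simp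
  next
    case False
    have K0: "A - {0} \<in> R" if "A \<in> R" for A
      using that z unfolding R_def Rs_def Qs_def by blast
    have K1: "{0} \<notin> R"
    proof
      assume "{0} \<in> R"
      then obtain B where "B \<in> Posi (Vspos \<union> \<A>)" "B - Vnonpos \<subseteq> {0}" unfolding R_def Rs_def by blast
      then have "B - Vnonpos \<subseteq> {}" using z by blast
      then have "{} \<in> R" using \<open>B \<in> Posi (Vspos \<union> \<A>)\<close> unfolding R_def Rs_def Qs_def by blast
      then show False using False by simp
    qed
    have K4: "A \<union> Q \<in> R" if "A \<in> R" "Q \<in> Qs" for A Q
      using that unfolding R_def Rs_def Qs_def by blast
    have K3: "{(\<lambda>x. lam (u, v) 0 * u x + lam (u, v) 1 * v x) | u v. u \<in> A \<and> v \<in> B} \<in> R"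
      if AB: "A \<in> R" "B \<in> R" and lam: "\<forall>p\<in>A \<times> B. lam p \<in> Rnplus 2" for A B lam
    proof -
      obtain PA where PA: "PA \<in> Posi (Vspos \<union> \<A>)" "PA - Vnonpos \<subseteq> A" using AB(1) unfolding R_def Rs_def by blast
      obtain PB where PB: "PB \<in> Posi (Vspos \<union> \<A>)" "PB - Vnonpos \<subseteq> B" using AB(2) unfolding R_def Rs_def by blast
      define c0 where "c0 a b = (if a \<in> Vnonpos then 1 else if b \<in> Vnonpos then 0 else lam (a,b) 0)" for a b :: "'x opt"
      define c1 where "c1 a b = (if a \<in> Vnonpos then 0 else if b \<in> Vnonpos then 1 else lam (a,b) 1)" for a b :: "'x opt"
      have ch: "\<forall>a\<in>PA. \<forall>b\<in>PB. 0 \<le> c0 a b \<and> 0 \<le> c1 a b \<and> 0 < c0 a b + (c1 a b :: real)"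
      proof (intro ballI)
        fix a b assume a: "a \<in> PA" and b: "b \<in> PB"
        show "0 \<le> c0 a b \<and> 0 \<le> c1 a b \<and> 0 < c0 a b + c1 a b"
        proof (cases "a \<in> Vnonpos \<or> b \<in> Vnonpos")
          case True then show ?thesis unfolding c0_def c1_def by auto
        next
          case False
          then have "a \<in> A" "b \<in> B" using a b PA PB by auto
          then have "lam (a,b) \<in> Rnplus 2" using lam by blast
          then show ?thesis using False Rnplus2D unfolding c0_def c1_def by auto
        qed
      qed
      from posi_K3[OF PA(1) PB(1) ch] obtain P where P: "P \<in> Posi (Vspos \<union> \<A>)"
        "P \<subseteq> {(\<lambda>x. c0 a b * a x + c1 a b * b x) | a b. a \<in> PA \<and> b \<in> PB}" by blast
      let ?O = "{(\<lambda>x. lam (u, v) 0 * u x + lam (u, v) 1 * v x) | u v. u \<in> A \<and> v \<in> B}"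
      have "P - Vnonpos \<subseteq> ?O"
      proof
        fix p assume p: "p \<in> P - Vnonpos"
        then obtain a b where ab: "a \<in> PA" "b \<in> PB" "p = (\<lambda>x. c0 a b * a x + c1 a b * b x)" using P(2) by blast
        show "p \<in> ?O"
        proof (cases "a \<in> Vnonpos")
          case True then have "p = a" using ab by (simp add: c0_def c1_def)
          then show ?thesis using p True by simp
        next
          case na: False
          show ?thesis
          proof (cases "b \<in> Vnonpos")
            case True then have "p = b" using ab na by (simp add: c0_def c1_def)
            then show ?thesis using p True by simp
          next
            case False
            then have "a \<in> A" "b \<in> B" "p = (\<lambda>x. lam (a, b) 0 * a x + lam (a, b) 1 * b x)"
              using ab na PA PB by (auto simp: c0_def c1_def)
            then show ?thesis by blast
          qed
        qed
      qed
      moreover have "?O \<in> Qs"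
      proof -
        have "finite A" "finite B" using AB RQ unfolding Qs_def by auto
        then show ?thesis unfolding Qs_def by (simp add: finite_image_set2)
      qed
      ultimately show ?thesis using P(1) unfolding R_def Rs_def by blast
    qed
    have cohR: "coherent R" unfolding coherent_def
      using RQ K0 K1 base K3 K4 by blast
    have inR: "R \<in> {K. coherent K \<and> \<A> \<subseteq> K}" using cohR base by blast
    then have "\<Inter> {K. coherent K \<and> \<A> \<subseteq> K} = R" using sub by blast
    then show ?thesis unfolding Ex_def R_def[symmetric] using inR by auto
  qed
qed

end
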